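(* Let $G=(V,E)$ be an undirected graph, $a,b\in[0,1]$, $\vec{x}\in\mathbb{R}^n$ non-negative with $\|\vec{x}\|_1=1$, and $(w_i)_{i\ge0}$ a non-negative weight sequence with $\sum_{i\ge0}w_i=1$ such that there exist a constant $L_0\ge1$ and a constant $\lambda<1$ with $w_i\lambda_{\max}^i\le\lambda^i$ for all $i\ge L_0$, where $\lambda_{\max}$ is the maximum singular value of $\mathbf{P}=\mathbf{D}^{-a}\mathbf{A}\mathbf{D}^{-b}$. Let $\delta\in(0,1)$, $\vec{\pi}=\sum_{i=0}^\infty w_i\mathbf{P}^i\vec{x}$ and, for an integer $L$, $\vec{\pi}_L=\sum_{i=0}^{L}w_i\mathbf{P}^i\vec{x}$. Then for $L=\max\{L_0,\lceil\log_\lambda((1-\lambda)\delta/19)\rceil\}=O(\log(1/\delta))$ we have $\left\|\sum_{i=L+1}^\infty w_i\mathbf{P}^i\vec{x}\right\|_2\le\delta/19$, and consequently: if $\hat{\vec{\pi}}\in\mathbb{R}^n$ satisfies $|\vec{\pi}_L(v)-\hat{\vec{\pi}}(v)|\le\frac{1}{20}\vec{\pi}_L(v)$ for every $v\in V$ with $\vec{\pi}_L(v)>\frac{18}{19}\delta$, then $|\vec{\pi}(v)-\hat{\vec{\pi}}(v)|\le\frac{1}{10}\vec{\pi}(v)$ for every $v\in V$ with $\vec{\pi}(v)\ge\delta$.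
   Context: $G=(V,E)$ has $n$ nodes; $\mathbf{A}$ is its adjacency matrix and $\mathbf{D}$ the diagonal degree matrix with $\mathbf{D}(i,i)=\sum_j\mathbf{A}(i,j)$. *)

theory Defs
  imports "HOL-Analysis.Analysis"
begin

definition undirected_graph :: "('n \<Rightarrow> 'n \<Rightarrow> bool) \<Rightarrow> bool" where
  "undirected_graph E \<longleftrightarrow> (\<forall>u v. E u v \<longleftrightarrow> E v u) \<and> (\<forall>v. \<not> E v v)"

definition adj_mat :: "('n::finite \<Rightarrow> 'n \<Rightarrow> bool) \<Rightarrow> real^'n^'n" where
  "adj_mat E = (\<chi> i j. if E i j then 1 else 0)"

definition degree :: "('n::finite \<Rightarrow> 'n \<Rightarrow> bool) \<Rightarrow> 'n \<Rightarrow> real" where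
  "degree E i = (\<Sum>j\<in>UNIV. adj_mat E $ i $ j)"

text \<open>P = D^(-a) A D^(-b), entrywise P(i,j) = d_i^(-a) A(i,j) d_j^(-b).
  (Rows/columns of isolated vertices are zero since A vanishes there.)\<close>

definition trans_mat :: "('n::finite \<Rightarrow> 'n \<Rightarrow> bool) \<Rightarrow> real \<Rightarrow> real \<Rightarrow> real^'n^'n" where
  "trans_mat E a b = (\<chi> i j. degree E i powr (-a) * adj_mat E $ i $ j * degree E j powr (-b))"

primrec matpow :: "real^'n^'n \<Rightarrow> nat \<Rightarrow> real^'n^'n" where
  "matpow M 0 = mat 1"
| "matpow M (Suc k) = M ** matpow M k"

definition max_singular_value :: "real^'n^'n \<Rightarrow> real" where
  "max_singular_value M =
     sqrt (Max {\<mu>. \<exists>v. v \<noteq> 0 \<and> (transpose M ** M) *v v = \<mu> *\<^sub>R v})"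

end

theory Submission
  imports Defs
begin


lemma quad_coeff_zero:
  fixes A B :: real
  assumes "\<And>t. 2 * t * A + t^2 * B \<le> 0"
  shows "A = 0"
proof -
  define c where "c = \<bar>B\<bar> + 1"
  have c: "c > 0" unfolding c_def by simp
  define t where "t = A / c"
  have "2 * t * A + t^2 * B \<le> 0" by (rule assms)
  hence "(2 * t * A + t^2 * B) * c^2 \<le> 0"
    by (simp add: mult_nonpos_nonneg)
  moreover have "(2 * t * A + t^2 * B) * c^2 = A^2 * (2*c + B)"
    unfolding t_def using c by (simp add: field_simps power2_eq_square)
  ultimately have "A^2 * (2*c + B) \<le> 0" by simp
  moreover have "2*c + B > 0" unfolding c_def by (simp add: abs_if)
  ultimately have "A^2 \<le> 0" by (simp add: mult_le_0_iff)
  thus ?thesis by simp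
qed

lemma nsq: fixes a b :: "'a::real_inner"
  shows "norm (a + t *\<^sub>R b) ^ 2 = norm a ^ 2 + 2 * t * (a \<bullet> b) + t^2 * norm b ^ 2"
  unfolding power2_norm_eq_inner by (simp add: inner_add_left inner_add_right inner_commute power2_eq_square algebra_simps)

lemma quad_rearr: fixes X Y Q N mu t :: real
  assumes "mu + 2 * t * X + t^2 * Q \<le> mu * (1 + 2 * t * Y + t^2 * N)"
  shows "2 * t * (X - mu * Y) + t^2 * (Q - mu * N) \<le> 0"
  using assms by (simp add: algebra_simps)

lemma Mdot:
  fixes P :: "real^'n^'n"
  shows "((transpose P ** P) *v y) \<bullet> z = (P *v y) \<bullet> (P *v z)"
proof -
  have "(transpose P ** P) *v y = transpose P *v (P *v y)"
    by (simp add: matrix_vector_mul_assoc)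
  also have "\<dots> = (P *v y) v* P" by simp
  finally show ?thesis by (simp add: dot_lmul_matrix)
qed

lemma opnorm_bound:
  fixes P :: "real^'n::finite^'n"
  shows "norm (P *v y) \<le> max_singular_value P * norm y"
proof -
  define M where "M = transpose P ** P"
  define S where "S = {\<mu>. \<exists>v. v \<noteq> 0 \<and> M *v v = \<mu> *\<^sub>R v}"
  have MD: "(M *v y) \<bullet> z = (P *v y) \<bullet> (P *v z)" for y z
    unfolding M_def by (rule Mdot)
  have "\<forall>\<mu>\<in>S. \<exists>v. v \<noteq> 0 \<and> M *v v = \<mu> *\<^sub>R v" unfolding S_def by blast
  then obtain f where f0: "\<forall>\<mu>\<in>S. f \<mu> \<noteq> 0 \<and> M *v f \<mu> = \<mu> *\<^sub>R f \<mu>"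
    by (drule_tac bchoice) (erule exE, blast)
  hence f: "\<And>\<mu>. \<mu> \<in> S \<Longrightarrow> f \<mu> \<noteq> 0 \<and> M *v f \<mu> = \<mu> *\<^sub>R f \<mu>" by blast
  have injf: "inj_on f S"
  proof (rule inj_onI)
    fix \<mu> \<nu> assume "\<mu> \<in> S" "\<nu> \<in> S" "f \<mu> = f \<nu>"
    note a = this
    have e1: "M *v f \<mu> = \<mu> *\<^sub>R f \<mu>" and nz: "f \<mu> \<noteq> 0" using f[OF a(1)] by blast+
    have e2: "M *v f \<nu> = \<nu> *\<^sub>R f \<nu>" using f[OF a(2)] by blast
    have "\<mu> *\<^sub>R f \<mu> = \<nu> *\<^sub>R f \<mu>" using e1 e2 a(3) by metis
    hence "(\<mu> - \<nu>) *\<^sub>R f \<mu> = 0" by (simp add: scaleR_diff_left)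
    thus "\<mu> = \<nu>" using nz by simp
  qed
  have orth: "pairwise orthogonal (f ` S)"
  proof (clarsimp simp: pairwise_def)
    fix \<mu> \<nu> assume m: "\<mu> \<in> S" and n: "\<nu> \<in> S" and ne: "f \<mu> \<noteq> f \<nu>"
    have "\<mu> * (f \<mu> \<bullet> f \<nu>) = (M *v f \<mu>) \<bullet> f \<nu>" using f[OF m] by simp
    also have "\<dots> = (M *v f \<nu>) \<bullet> f \<mu>" using MD[of "f \<mu>" "f \<nu>"] MD[of "f \<nu>" "f \<mu>"] by (simp only: inner_commute)
    also have "\<dots> = \<nu> * (f \<mu> \<bullet> f \<nu>)" using f[OF n] by (simp add: inner_commute)
    finally have "(\<mu> - \<nu>) * (f \<mu> \<bullet> f \<nu>) = 0" by (simp add: algebra_simps)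
    moreover have "\<mu> \<noteq> \<nu>" using ne by auto
    ultimately show "orthogonal (f \<mu>) (f \<nu>)" by (simp add: orthogonal_def)
  qed
  have "0 \<notin> f ` S" using f by auto
  with orth have "independent (f ` S)" by (rule pairwise_orthogonal_independent)
  hence "finite (f ` S)" using independent_bound by blast
  hence finS: "finite S" using injf finite_imageD by blast
  define q where "q = (\<lambda>y. norm (P *v y) ^ 2)"
  have contq: "continuous_on (sphere 0 1) q"
    unfolding q_def
    by (intro continuous_intros linear_continuous_on linear_linear[THEN iffD1] matrix_vector_mul_linear)
  have "sphere (0::real^'n) 1 \<noteq> {}" by simp
  then obtain u where u: "u \<in> sphere 0 1" and umax: "\<forall>y\<in>sphere 0 1. q y \<le> q u"
    using continuous_attains_sup[OF compact_sphere _ contq] by blast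
  define \<mu> where "\<mu> = q u"
  have bnd: "q y \<le> \<mu> * norm y ^ 2" for y
  proof (cases "y = 0")
    case True thus ?thesis by (simp add: q_def)
  next
    case False
    hence "y /\<^sub>R norm y \<in> sphere 0 1" by simp
    hence "q (y /\<^sub>R norm y) \<le> \<mu>" using umax \<mu>_def by blast
    moreover have "q (y /\<^sub>R norm y) = q y / norm y ^ 2"
      by (simp add: q_def matrix_vector_mult_scaleR power_divide power_mult_distrib divide_inverse power_inverse)
    ultimately show ?thesis using False by (simp add: divide_le_eq)
  qed
  have nu: "norm u = 1" using u by simp
  have key: "(M *v u) \<bullet> h = \<mu> * (u \<bullet> h)" for h
  proof -
    have "2 * t * ((P *v u) \<bullet> (P *v h) - \<mu> * (u \<bullet> h)) + t^2 * (q h - \<mu> * norm h ^ 2) \<le> 0" for t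
    proof -
      have "q (u + t *\<^sub>R h) \<le> \<mu> * norm (u + t *\<^sub>R h) ^ 2" by (rule bnd)
      moreover have "q (u + t *\<^sub>R h) = \<mu> + 2 * t * ((P *v u) \<bullet> (P *v h)) + t^2 * q h"
        unfolding q_def \<mu>_def matrix_vector_right_distrib matrix_vector_mult_scaleR by (rule nsq)
      moreover have "norm (u + t *\<^sub>R h) ^ 2 = 1 + 2 * t * (u \<bullet> h) + t^2 * norm h ^ 2"
        using nu nsq[of u t h] by simp
      ultimately show ?thesis by (intro quad_rearr) simp
    qed
    hence "(P *v u) \<bullet> (P *v h) - \<mu> * (u \<bullet> h) = 0" by (rule quad_coeff_zero)
    thus ?thesis using MD by simp
  qed
  have "(M *v u - \<mu> *\<^sub>R u) \<bullet> (M *v u - \<mu> *\<^sub>R u) = 0"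
    by (simp add: inner_diff_left key)
  hence "M *v u = \<mu> *\<^sub>R u" by simp
  moreover have "u \<noteq> 0" using nu by auto
  ultimately have "\<mu> \<in> S" unfolding S_def by blast
  hence muMax: "\<mu> \<le> Max S" using finS by simp
  have mu0: "0 \<le> \<mu>" by (simp add: \<mu>_def q_def)
  have "norm (P *v y) ^ 2 \<le> Max S * norm y ^ 2"
    using bnd[of y] muMax unfolding q_def by (meson order_trans mult_right_mono zero_le_power2)
  hence "sqrt (norm (P *v y) ^ 2) \<le> sqrt (Max S * norm y ^ 2)" by (rule real_sqrt_le_mono)
  hence "norm (P *v y) \<le> sqrt (Max S) * norm y" by (simp add: real_sqrt_mult)
  moreover have "max_singular_value P = sqrt (Max S)"
    unfolding max_singular_value_def S_def M_def by simp
  ultimately show ?thesis by simp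
qed


lemma sigma_nonneg:
  fixes P :: "real^'n::finite^'n"
  shows "0 \<le> max_singular_value P"
proof -
  obtain k :: 'n where True by blast
  have ne: "norm (axis k (1::real) :: real^'n) = 1" by simp
  have "0 \<le> norm (P *v axis k 1)" by simp
  also have "\<dots> \<le> max_singular_value P * norm (axis k (1::real) :: real^'n)" by (rule opnorm_bound)
  finally show ?thesis using ne by simp
qed

lemma matpow_bound:
  fixes P :: "real^'n::finite^'n"
  shows "norm (matpow P i *v y) \<le> max_singular_value P ^ i * norm y"
proof (induction i)
  case 0 thus ?case by simp
next
  case (Suc i)
  have "norm (matpow P (Suc i) *v y) = norm (P *v (matpow P i *v y))"
    by (simp add: matrix_vector_mul_assoc)
  also have "\<dots> \<le> max_singular_value P * norm (matpow P i *v y)" by (rule opnorm_bound)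
  also have "\<dots> \<le> max_singular_value P * (max_singular_value P ^ i * norm y)"
    using Suc.IH sigma_nonneg[of P] by (rule mult_left_mono)
  finally show ?case by (simp add: mult.assoc)
qed

lemma degree_nonneg: "0 \<le> degree E i"
  unfolding degree_def adj_mat_def by (intro sum_nonneg) simp

lemma trans_nonneg: "0 \<le> trans_mat E a b $ i $ j"
  unfolding trans_mat_def adj_mat_def by simp

lemma matpow_nonneg:
  assumes "\<And>i j. 0 \<le> (P::real^'n::finite^'n) $ i $ j"
  shows "0 \<le> matpow P k $ i $ j"
proof (induction k arbitrary: i j)
  case 0 thus ?case by (simp add: mat_def)
next
  case (Suc k)
  show ?case by (simp add: matrix_matrix_mult_def assms Suc.IH sum_nonneg)
qed

lemma mv_nonneg:
  assumes "\<And>i j. 0 \<le> (M::real^'n::finite^'n) $ i $ j" "\<And>j. 0 \<le> x $ j"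
  shows "0 \<le> (M *v x) $ i"
  by (simp add: matrix_vector_mult_def assms sum_nonneg)



theorem theoremC2:
  fixes E :: "'n::finite \<Rightarrow> 'n \<Rightarrow> bool"
    and a b :: real
    and x :: "real^'n"
    and w :: "nat \<Rightarrow> real"
    and L0 :: nat
    and lam :: real
    and \<delta> :: real
  assumes "undirected_graph E"
    and "0 \<le> a" "a \<le> 1" "0 \<le> b" "b \<le> 1"
    and "\<forall>v. 0 \<le> x $ v" "(\<Sum>v\<in>UNIV. x $ v) = 1"
    and "\<forall>i. 0 \<le> w i" "w sums 1"
    and "L0 \<ge> 1" "0 < lam" "lam < 1"
    and "\<forall>i\<ge>L0. w i * max_singular_value (trans_mat E a b) ^ i \<le> lam ^ i"
    and "0 < \<delta>" "\<delta> < 1"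
  shows "let P = trans_mat E a b;
             \<pi> = (\<Sum>i. w i *\<^sub>R (matpow P i *v x));
             L = max L0 (nat \<lceil>log lam ((1 - lam) * \<delta> / 19)\<rceil>);
             \<pi>L = (\<Sum>i\<le>L. w i *\<^sub>R (matpow P i *v x))
         in norm (\<Sum>i. w (i + L + 1) *\<^sub>R (matpow P (i + L + 1) *v x)) \<le> \<delta> / 19
            \<and> (\<forall>\<pi>h :: real^'n.
                 (\<forall>v. \<pi>L $ v > 18 / 19 * \<delta> \<longrightarrow> \<bar>\<pi>L $ v - \<pi>h $ v\<bar> \<le> \<pi>L $ v / 20)
                 \<longrightarrow> (\<forall>v. \<pi> $ v \<ge> \<delta> \<longrightarrow> \<bar>\<pi> $ v - \<pi>h $ v\<bar> \<le> \<pi> $ v / 10))"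
proof -
  note xnn = assms(6) and wnn = assms(8) and lam0 = assms(11) and lam1 = assms(12)
    and wb = assms(13) and d0 = assms(14)
  define P where "P = trans_mat E a b"
  define \<sigma> where "\<sigma> = max_singular_value P"
  define f where "f = (\<lambda>i. w i *\<^sub>R (matpow P i *v x))"
  define \<pi> where "\<pi> = (\<Sum>i. w i *\<^sub>R (matpow P i *v x))"
  define L where "L = max L0 (nat \<lceil>log lam ((1 - lam) * \<delta> / 19)\<rceil>)"
  define \<pi>L where "\<pi>L = (\<Sum>i\<le>L. w i *\<^sub>R (matpow P i *v x))"
  define T where "T = (\<Sum>i. w (i + L + 1) *\<^sub>R (matpow P (i + L + 1) *v x))"
  have sig0: "0 \<le> \<sigma>" unfolding \<sigma>_def by (rule sigma_nonneg)
  have nx: "norm x \<le> 1"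
  proof -
    have "norm x \<le> (\<Sum>v\<in>UNIV. \<bar>x $ v\<bar>)" by (rule norm_le_l1_cart)
    also have "\<dots> = 1" using xnn assms(7) by simp
    finally show ?thesis .
  qed
  have nf: "norm (f i) \<le> w i * \<sigma> ^ i" for i
  proof -
    have "norm (f i) = w i * norm (matpow P i *v x)" unfolding f_def using wnn by simp
    also have "\<dots> \<le> w i * (\<sigma> ^ i * norm x)"
      unfolding \<sigma>_def using wnn by (intro mult_left_mono matpow_bound) auto
    also have "\<dots> \<le> w i * \<sigma> ^ i"
      using nx wnn sig0 by (intro mult_left_mono) (auto intro: mult_left_le)
    finally show ?thesis .
  qed
  have nfl: "norm (f i) \<le> lam ^ i" if "i \<ge> L0" for i
    using nf[of i] wb that unfolding \<sigma>_def P_def by force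
  have geo: "summable (\<lambda>i. lam ^ i)" using lam0 lam1 by (intro summable_geometric) simp
  have sumf: "summable f" by (rule summable_comparison_test'[OF geo nfl])
  have LL0: "L0 \<le> L" unfolding L_def by simp
  define c where "c = (1 - lam) * \<delta> / 19"
  have c0: "0 < c" using lam1 d0 unfolding c_def by simp
  have lamL: "lam ^ L \<le> c"
  proof -
    have "log lam c \<le> real (nat \<lceil>log lam c\<rceil>)" by linarith
    also have "\<dots> \<le> real L" unfolding L_def c_def by simp
    finally have le: "log lam c \<le> real L" .
    have "lam ^ L = lam powr (real L)" using lam0 by (simp add: powr_realpow)
    also have "\<dots> \<le> lam powr (log lam c)" using le lam0 lam1 by (intro powr_mono') auto
    also have "\<dots> = c" using lam0 lam1 c0 by simp
    finally show ?thesis .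
  qed
  have Teq: "T = (\<Sum>i. f (i + Suc L))" unfolding T_def f_def by simp
  have g: "summable (\<lambda>i. lam ^ (Suc L) * lam ^ i)" using geo by (rule summable_mult)
  have nT: "norm T \<le> lam * \<delta> / 19"
  proof -
    have "norm T \<le> (\<Sum>i. lam ^ (Suc L) * lam ^ i)"
      unfolding Teq
    proof (rule norm_suminf_le[OF _ g])
      fix i
      have "norm (f (i + Suc L)) \<le> lam ^ (i + Suc L)" using LL0 by (intro nfl) simp
      thus "norm (f (i + Suc L)) \<le> lam ^ (Suc L) * lam ^ i" by (simp add: power_add mult_ac)
    qed
    also have "\<dots> = lam ^ (Suc L) * (1 / (1 - lam))"
      using lam0 lam1 by (simp add: suminf_mult[OF geo] suminf_geometric)
    also have "\<dots> = lam * lam ^ L / (1 - lam)" by simp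
    also have "\<dots> \<le> lam * c / (1 - lam)"
      using lamL lam0 lam1 by (intro divide_right_mono mult_left_mono) auto
    also have "\<dots> = lam * \<delta> / 19" unfolding c_def using lam1 by (simp add: field_simps)
    finally show ?thesis .
  qed
  have nT2: "norm T < \<delta> / 19"
  proof -
    have "lam * \<delta> / 19 < \<delta> / 19" using lam1 d0 by (simp add: divide_strict_right_mono)
    thus ?thesis using nT by linarith
  qed
  have dec: "\<pi> = T + \<pi>L"
  proof -
    have "\<pi> = suminf f" unfolding \<pi>_def f_def by simp
    also have "\<dots> = (\<Sum>i. f (i + Suc L)) + (\<Sum>i<Suc L. f i)" by (rule suminf_split_initial_segment[OF sumf])
    also have "(\<Sum>i<Suc L. f i) = \<pi>L" unfolding \<pi>L_def f_def lessThan_Suc_atMost by simp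
    finally show ?thesis using Teq by simp
  qed
  have Pnn: "\<And>i j. 0 \<le> P $ i $ j" unfolding P_def by (rule trans_nonneg)
  have Tnn: "0 \<le> T $ v" for v
  proof -
    have st: "summable (\<lambda>i. f (i + Suc L))" by (rule summable_ignore_initial_segment[OF sumf])
    have "T $ v = (\<Sum>i. f (i + Suc L) $ v)"
      unfolding Teq using bounded_linear.suminf[OF bounded_linear_vec_nth st] by simp
    also have "\<dots> \<ge> 0"
    proof (rule suminf_nonneg)
      show "summable (\<lambda>i. f (i + Suc L) $ v)"
        by (rule bounded_linear.summable[OF bounded_linear_vec_nth st])
      fix i
      have "0 \<le> (matpow P (i + Suc L) *v x) $ v"
        using xnn Pnn by (intro mv_nonneg matpow_nonneg) auto
      thus "0 \<le> f (i + Suc L) $ v" unfolding f_def using wnn by simp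
    qed
    finally show ?thesis .
  qed
  have Tle: "T $ v \<le> \<delta> / 19" for v
    using component_le_norm_cart[of T v] nT2 by linarith
  have main: "\<forall>\<pi>h :: real^'n.
                 (\<forall>v. \<pi>L $ v > 18 / 19 * \<delta> \<longrightarrow> \<bar>\<pi>L $ v - \<pi>h $ v\<bar> \<le> \<pi>L $ v / 20)
                 \<longrightarrow> (\<forall>v. \<pi> $ v \<ge> \<delta> \<longrightarrow> \<bar>\<pi> $ v - \<pi>h $ v\<bar> \<le> \<pi> $ v / 10)"
  proof (intro allI impI)
    fix \<pi>h :: "real^'n" and v
    assume h: "\<forall>v. \<pi>L $ v > 18 / 19 * \<delta> \<longrightarrow> \<bar>\<pi>L $ v - \<pi>h $ v\<bar> \<le> \<pi>L $ v / 20"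
      and pv: "\<pi> $ v \<ge> \<delta>"
    have cv: "\<pi> $ v = T $ v + \<pi>L $ v" using dec by simp
    have t0: "0 \<le> T $ v" by (rule Tnn)
    have t1: "T $ v < \<delta> / 19" using component_le_norm_cart[of T v] nT2 by linarith
    have "\<pi>L $ v > 18 / 19 * \<delta>" using cv t1 pv by linarith
    hence hv: "\<bar>\<pi>L $ v - \<pi>h $ v\<bar> \<le> \<pi>L $ v / 20" using h by blast
    have "\<bar>\<pi> $ v - \<pi>h $ v\<bar> \<le> T $ v + \<bar>\<pi>L $ v - \<pi>h $ v\<bar>" using cv t0 by linarith
    thus "\<bar>\<pi> $ v - \<pi>h $ v\<bar> \<le> \<pi> $ v / 10" using hv cv t0 t1 pv by linarith
  qed
  have "norm T \<le> \<delta> / 19" using nT2 by simp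
  with main show ?thesis
    unfolding Let_def P_def[symmetric] \<pi>_def[symmetric] L_def[symmetric] \<pi>L_def[symmetric] T_def[symmetric]
    by blast
qed

end
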